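(* Let $Y$ be a random variable whose moment generating function $E[e^{tY}]$ exists for $|t|<r_0$ for some $r_0>0$. Let $(Y_j)_{j\ge1}$ be mutually independent copies of $Y$, $S_0=0$, $S_k=Y_1+\cdots+Y_k$ for $k\ge1$. Let $r$ be a positive integer and define the probabilistic bivariate $r$-Bell polynomials $\phi_{n,r}^Y(x,y)$ by $$\Big(1+y\big(E[e^{Yt}]-1\big)\Big)^{x}e^{rt}=\sum_{n=0}^{\infty}\phi_{n,r}^Y(x,y)\frac{t^n}{n!}.$$ Then for every $n\ge0$, $$\phi_{n,r}^Y(x,y)=\sum_{k=0}^{n}{n+r\brace k+r}_{r,Y}(x)_k\,y^k,$$ where ${n+r\brace k+r}_{r,Y}=\frac{1}{k!}\sum_{j=0}^{k}\binom{k}{j}(-1)^{k-j}E\big[(S_j+r)^n\big]$ for $n\ge k\ge0$.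
   Context: $(x)_0=1$, $(x)_k=x(x-1)\cdots(x-k+1)$ for $k\ge1$. The power $(1+u)^x$ is understood via the binomial series $\sum_{k\ge0}\binom{x}{k}u^k$ and the identity is one of power series in $t$; $x,y$ are variables. The numbers ${n+r\brace k+r}_{r,Y}$ are the probabilistic $r$-Stirling numbers of the second kind associated with $Y$. *)

theory Defs
  imports "HOL-Probability.Probability" "HOL-Computational_Algebra.Formal_Power_Series"
begin

definition falling_fact :: "real \<Rightarrow> nat \<Rightarrow> real" where
  "falling_fact x k = (\<Prod>i<k. x - real i)"

text \<open>Moment generating function E[e^{tY}] as a formal power series in t:
  sum over n of E[Y^n] t^n / n!.\<close>
definition mgf_fps :: "'a measure \<Rightarrow> ('a \<Rightarrow> real) \<Rightarrow> real fps" where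
  "mgf_fps M Y = Abs_fps (\<lambda>n. (\<integral>\<omega>. (Y \<omega>) ^ n \<partial>M) / fact n)"

text \<open>Probabilistic bivariate r-Bell polynomials: n! times the t^n coefficient of
  (1 + y (E[e^{Yt}] - 1))^x e^{rt}, where (1+u)^x is the binomial series
  sum_k (x choose k) u^k, i.e. fps_binomial x composed with u.\<close>
definition prob_r_bell :: "'a measure \<Rightarrow> ('a \<Rightarrow> real) \<Rightarrow> nat \<Rightarrow> nat \<Rightarrow> real \<Rightarrow> real \<Rightarrow> real" where
  "prob_r_bell M Y r n x y =
     fact n * fps_nth ((fps_binomial x oo (fps_const y * (mgf_fps M Y - 1))) * fps_exp (real r)) n"

definition partial_sum :: "(nat \<Rightarrow> 'a \<Rightarrow> real) \<Rightarrow> nat \<Rightarrow> 'a \<Rightarrow> real" where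
  "partial_sum Ys j \<omega> = (\<Sum>i\<in>{1..j}. Ys i \<omega>)"

definition prob_r_stirling2 :: "'a measure \<Rightarrow> (nat \<Rightarrow> 'a \<Rightarrow> real) \<Rightarrow> nat \<Rightarrow> nat \<Rightarrow> nat \<Rightarrow> real" where
  "prob_r_stirling2 M Ys r n k =
     (1 / fact k) * (\<Sum>j\<le>k. real (k choose j) * (-1) ^ (k - j) *
        (\<integral>\<omega>. (partial_sum Ys j \<omega> + real r) ^ n \<partial>M))"

end

theory Submission
  imports Defs
begin


lemma mgf_nth: "fps_nth (mgf_fps M Z) n = (\<integral>\<omega>. Z \<omega> ^ n \<partial>M) / fact n"
  by (simp add: mgf_fps_def)

lemma (in prob_space) mgf_add:
  fixes Z W :: "'a \<Rightarrow> real"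
  assumes iZ: "\<And>n. integrable M (\<lambda>\<omega>. Z \<omega> ^ n)" and iW: "\<And>n. integrable M (\<lambda>\<omega>. W \<omega> ^ n)"
    and ind: "\<And>a b. integrable M (\<lambda>\<omega>. Z \<omega> ^ a * W \<omega> ^ b) \<and>
       (\<integral>\<omega>. Z \<omega> ^ a * W \<omega> ^ b \<partial>M) = (\<integral>\<omega>. Z \<omega> ^ a \<partial>M) * (\<integral>\<omega>. W \<omega> ^ b \<partial>M)"
  shows "mgf_fps M (\<lambda>\<omega>. Z \<omega> + W \<omega>) = mgf_fps M Z * mgf_fps M W"
    and "integrable M (\<lambda>\<omega>. (Z \<omega> + W \<omega>) ^ n)"
proof -
  have exp: "(\<lambda>\<omega>. (Z \<omega> + W \<omega>) ^ n) = (\<lambda>\<omega>. \<Sum>k\<le>n. real (n choose k) * (Z \<omega> ^ k * W \<omega> ^ (n - k)))" for n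
    by (simp add: binomial_ring mult.assoc)
  have ii: "integrable M (\<lambda>\<omega>. Z \<omega> ^ a * W \<omega> ^ b)" for a b using ind by blast
  have ie: "(\<integral>\<omega>. Z \<omega> ^ a * W \<omega> ^ b \<partial>M) = (\<integral>\<omega>. Z \<omega> ^ a \<partial>M) * (\<integral>\<omega>. W \<omega> ^ b \<partial>M)" for a b using ind by blast
  show "integrable M (\<lambda>\<omega>. (Z \<omega> + W \<omega>) ^ n)"
  proof -
    show ?thesis unfolding exp by (rule Bochner_Integration.integrable_sum, rule integrable_mult_right, rule ii)
  qed
  show "mgf_fps M (\<lambda>\<omega>. Z \<omega> + W \<omega>) = mgf_fps M Z * mgf_fps M W"
  proof (rule fps_ext)
    fix n
    have "fps_nth (mgf_fps M (\<lambda>\<omega>. Z \<omega> + W \<omega>)) n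
        = (\<Sum>k\<le>n. real (n choose k) * ((\<integral>\<omega>. Z \<omega> ^ k \<partial>M) * (\<integral>\<omega>. W \<omega> ^ (n-k) \<partial>M))) / fact n"
      unfolding mgf_nth exp
      by (subst Bochner_Integration.integral_sum) (auto simp: ii ie integral_mult_right_zero)
    also have "\<dots> = (\<Sum>k\<le>n. ((\<integral>\<omega>. Z \<omega> ^ k \<partial>M) / fact k) * ((\<integral>\<omega>. W \<omega> ^ (n-k) \<partial>M) / fact (n - k)))"
      unfolding sum_divide_distrib
      by (intro sum.cong refl) (simp add: binomial_fact field_simps)
    also have "\<dots> = fps_nth (mgf_fps M Z * mgf_fps M W) n"
      by (simp add: fps_mult_nth mgf_nth atLeast0AtMost)
    finally show "fps_nth (mgf_fps M (\<lambda>\<omega>. Z \<omega> + W \<omega>)) n = fps_nth (mgf_fps M Z * mgf_fps M W) n" .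
  qed
qed

lemma (in prob_space) mgf_const: "mgf_fps M (\<lambda>_. c) = fps_exp c"
  by (rule fps_ext) (simp add: mgf_nth fps_exp_def prob_space)



lemma (in prob_space) psum_mgf:
  fixes Y :: "'a \<Rightarrow> real" and Ys :: "nat \<Rightarrow> 'a \<Rightarrow> real"
  assumes Y: "Y \<in> borel_measurable M" and mY: "\<And>n. integrable M (\<lambda>\<omega>. Y \<omega> ^ n)"
    and Ysm: "\<And>j. j \<ge> 1 \<Longrightarrow> Ys j \<in> borel_measurable M"
    and dist: "\<And>j. j \<ge> 1 \<Longrightarrow> distr M borel (Ys j) = distr M borel Y"
    and ind: "indep_vars (\<lambda>_. borel) Ys {1..}"
  shows "(\<forall>n. integrable M (\<lambda>\<omega>. partial_sum Ys j \<omega> ^ n)) \<and> mgf_fps M (partial_sum Ys j) = mgf_fps M Y ^ j"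
proof (induction j)
  case 0
  have "partial_sum Ys 0 = (\<lambda>_. 0)" by (simp add: partial_sum_def fun_eq_iff)
  moreover have "mgf_fps M (\<lambda>_. 0) = 1"
    by (rule fps_ext) (simp add: mgf_nth prob_space)
  ultimately show ?case by simp
next
  case (Suc j)
  let ?S = "partial_sum Ys j"
  let ?X = "Ys (Suc j)"
  have Xm: "?X \<in> borel_measurable M" using Ysm by simp
  have iX: "integrable M (\<lambda>\<omega>. ?X \<omega> ^ n)" for n
  proof -
    have "integrable (distr M borel Y) (\<lambda>x. x ^ n)"
      using mY[of n] Y by (subst integrable_distr_eq) auto
    then have "integrable (distr M borel ?X) (\<lambda>x. x ^ n)" using dist[of "Suc j"] by simp
    then show ?thesis using Xm by (subst (asm) integrable_distr_eq) auto
  qed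
  have eX: "(\<integral>\<omega>. ?X \<omega> ^ n \<partial>M) = (\<integral>\<omega>. Y \<omega> ^ n \<partial>M)" for n
  proof -
    have "(\<integral>\<omega>. ?X \<omega> ^ n \<partial>M) = (\<integral>x. x ^ n \<partial>distr M borel ?X)"
      using Xm by (subst integral_distr) auto
    also have "\<dots> = (\<integral>x. x ^ n \<partial>distr M borel Y)" using dist[of "Suc j"] by simp
    also have "\<dots> = (\<integral>\<omega>. Y \<omega> ^ n \<partial>M)" using Y by (subst integral_distr) auto
    finally show ?thesis .
  qed
  have mX: "mgf_fps M ?X = mgf_fps M Y" by (rule fps_ext) (simp add: mgf_nth eX)
  have iv: "indep_var borel ?X borel (\<lambda>\<omega>. \<Sum>i\<in>{1..j}. Ys i \<omega>)"
    by (rule indep_vars_sum) (auto intro: indep_vars_subset[OF ind])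
  have iv2: "indep_var borel ((\<lambda>x. x ^ b) \<circ> ?X) borel ((\<lambda>x. x ^ a) \<circ> ?S)" for a b
    using indep_var_compose[OF iv, of "\<lambda>x. x ^ b" borel "\<lambda>x. x ^ a" borel]
    by (simp add: partial_sum_def[abs_def] comp_def)
  have indp: "integrable M (\<lambda>\<omega>. ?S \<omega> ^ a * ?X \<omega> ^ b) \<and>
       (\<integral>\<omega>. ?S \<omega> ^ a * ?X \<omega> ^ b \<partial>M) = (\<integral>\<omega>. ?S \<omega> ^ a \<partial>M) * (\<integral>\<omega>. ?X \<omega> ^ b \<partial>M)" for a b
  proof -
    have i1: "integrable M ((\<lambda>x. x ^ b) \<circ> ?X)" using iX[of b] by (simp add: comp_def)
    have i2: "integrable M ((\<lambda>x. x ^ a) \<circ> ?S)" using Suc.IH by (simp add: comp_def)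
    show ?thesis
      using indep_var_lebesgue_integral[OF iv2 i1 i2] indep_var_integrable[OF iv2 i1 i2]
      by (simp add: comp_def mult.commute)
  qed
  have eqS: "partial_sum Ys (Suc j) = (\<lambda>\<omega>. ?S \<omega> + ?X \<omega>)"
    by (simp add: partial_sum_def fun_eq_iff)
  show ?case
    unfolding eqS
    using mgf_add[of ?S ?X, OF _ iX indp] Suc.IH mX by (simp add: mult.commute)
qed



lemma falling_gchoose: "falling_fact x k = (x gchoose k) * fact k"
  by (simp add: falling_fact_def gbinomial_prod_rev atLeast0LessThan)

lemma pow_le_exp: "(x::real) \<ge> 0 \<Longrightarrow> x ^ n / fact n \<le> exp x"
proof -
  assume x: "x \<ge> 0"
  have e: "(\<lambda>n. x^n /\<^sub>R fact n) = (\<lambda>n. x^n / fact n)"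
    by (rule ext) (simp add: divide_inverse mult.commute)
  have s: "(\<lambda>n. x^n / fact n) sums exp x" using exp_converges[of x] by (simp only: e)
  have "x ^ n / fact n \<le> (\<Sum>k<Suc n. x^k / fact k)"
    by (rule member_le_sum) (use x in auto)
  also have "\<dots> \<le> exp x"
    using sum_le_suminf[OF sums_summable[OF s], of "{..<Suc n}"] s x by (auto simp: sums_iff)
  finally show ?thesis .
qed

lemma abs_pow_bound:
  fixes t u :: real assumes "t > 0"
  shows "\<bar>u\<bar> ^ n \<le> fact n / t ^ n * (exp (t*u) + exp (-t*u))"
proof -
  have "(t*\<bar>u\<bar>)^n / fact n \<le> exp (t*\<bar>u\<bar>)" using pow_le_exp[of "t*\<bar>u\<bar>" n] assms by simp
  also have "\<dots> \<le> exp (t*u) + exp (-t*u)" by (cases "u \<ge> 0") auto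
  finally have "t^n * \<bar>u\<bar>^n \<le> fact n * (exp (t*u) + exp (-t*u))"
    by (simp add: power_mult_distrib divide_le_eq mult.commute)
  then show ?thesis using assms by (simp add: field_simps)
qed

lemma moments_exist:
  fixes Y :: "'a \<Rightarrow> real"
  assumes Y: "Y \<in> borel_measurable M"
    and mgf: "\<exists>r0>0. \<forall>t. \<bar>t\<bar> < r0 \<longrightarrow> integrable M (\<lambda>\<omega>. exp (t * Y \<omega>))"
  shows "integrable M (\<lambda>\<omega>. Y \<omega> ^ n)"
proof -
  obtain r0 where r0: "r0 > 0" "\<And>t. \<bar>t\<bar> < r0 \<Longrightarrow> integrable M (\<lambda>\<omega>. exp (t * Y \<omega>))" using mgf by blast
  define t where "t = r0 / 2"
  have t: "t > 0" "\<bar>t\<bar> < r0" "\<bar>-t\<bar> < r0" using r0 by (auto simp: t_def)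
  have "integrable M (\<lambda>\<omega>. fact n / t ^ n * (exp (t * Y \<omega>) + exp (-t * Y \<omega>)))"
    using r0(2)[OF t(2)] r0(2)[OF t(3)] by (intro integrable_mult_right Bochner_Integration.integrable_add) auto
  then show ?thesis
  proof (rule Bochner_Integration.integrable_bound)
    show "(\<lambda>\<omega>. Y \<omega> ^ n) \<in> borel_measurable M" using Y by measurable
    show "AE x in M. norm (Y x ^ n) \<le> norm (fact n / t ^ n * (exp (t * Y x) + exp (- t * Y x)))"
      using abs_pow_bound[OF t(1)] t(1) by (intro AE_I2) (simp add: power_abs)
  qed
qed



lemma m1: "(-1::real fps)^k = fps_const ((-1)^k)"
  by (metis fps_const_neg fps_const_1_eq_1 fps_const_power)

lemma c4: "fps_const (a::real) * X * fps_const b * E = fps_const (a*b) * (X*E)"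
proof -
  have "fps_const a * X * fps_const b * E = (fps_const a * fps_const b) * (X * E)"
    by (simp only: mult_ac)
  then show ?thesis by simp
qed

lemma fps_part:
  fixes G E :: "real fps" and x y :: real
  assumes G0: "fps_nth (G) 0 = 1"
  shows "fact n * fps_nth (((fps_binomial x oo (fps_const y * (G - 1))) * E)) n =
     (\<Sum>i\<le>n. (x gchoose i) * y ^ i * (\<Sum>j\<le>i. real (i choose j) * (-1) ^ (i - j) * (fact n * fps_nth ((G ^ j * E)) n)))"
proof -
  define A where "A = G - 1"
  define B where "B = fps_const y * A"
  have B0: "fps_nth (B) 0 = 0" using G0 by (simp add: B_def A_def)
  define P where "P = (\<Sum>i\<le>n. fps_const (x gchoose i) * B ^ i)"
  have cmp: "fps_nth ((fps_binomial x oo B)) m = fps_nth (P) m" if "m \<le> n" for m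
  proof -
    have "fps_nth ((fps_binomial x oo B)) m = (\<Sum>i\<in>{0..m}. (x gchoose i) * (fps_nth (B ^ i) m))"
      by (simp add: fps_compose_nth)
    also have "\<dots> = (\<Sum>i\<le>n. (x gchoose i) * (fps_nth (B ^ i) m))"
      using that startsby_zero_power_prefix[OF B0]
      by (intro sum.mono_neutral_left) auto
    also have "\<dots> = fps_nth (P) m" by (simp add: P_def fps_sum_nth)
    finally show ?thesis .
  qed
  have AE: "fps_nth ((A ^ i * E)) n = (\<Sum>j\<le>i. real (i choose j) * (-1) ^ (i - j) * fps_nth ((G ^ j * E)) n)" for i
  proof -
    have "A ^ i = (G + (-1)) ^ i" by (simp add: A_def)
    also have "\<dots> = (\<Sum>j\<le>i. of_nat (i choose j) * G ^ j * (-1) ^ (i - j))" by (rule binomial_ring)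
    finally have "A ^ i * E = (\<Sum>j\<le>i. fps_const (real (i choose j)) * G ^ j * fps_const ((-1) ^ (i - j)) * E)"
      by (simp only: sum_distrib_right fps_of_nat m1)
    also have "\<dots> = (\<Sum>j\<le>i. fps_const (real (i choose j) * (-1) ^ (i - j)) * (G ^ j * E))"
      by (simp only: c4)
    finally show ?thesis by (simp only: fps_sum_nth fps_mult_left_const_nth)
  qed
  have BE: "fps_nth ((B ^ i * E)) n = y ^ i * fps_nth ((A ^ i * E)) n" for i
  proof -
    have "B ^ i = fps_const (y ^ i) * A ^ i"
      by (simp add: B_def power_mult_distrib)
    then have "B ^ i * E = fps_const (y ^ i) * (A ^ i * E)"
      by (simp only: mult.assoc)
    then show ?thesis by (simp only: fps_mult_left_const_nth)
  qed
  have "fps_nth (((fps_binomial x oo B) * E)) n = fps_nth ((P * E)) n"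
    by (simp add: fps_mult_nth cmp)
  also have "P * E = (\<Sum>i\<le>n. fps_const (x gchoose i) * (B ^ i * E))"
    by (simp only: P_def sum_distrib_right mult.assoc)
  finally have "fps_nth (((fps_binomial x oo B) * E)) n = (\<Sum>i\<le>n. (x gchoose i) * (y ^ i * (\<Sum>j\<le>i. real (i choose j) * (-1) ^ (i - j) * fps_nth ((G ^ j * E)) n)))"
    by (simp only: fps_sum_nth fps_mult_left_const_nth BE AE)
  then show ?thesis
    unfolding B_def A_def by (simp add: sum_distrib_left mult_ac)
qed

lemma aux_cancel: "(f::real) \<noteq> 0 \<Longrightarrow> a * b * S = (1 / f * S) * (a * f) * b"
  by simp

theorem theorem2p3:
  fixes M :: "'a measure" and Y :: "'a \<Rightarrow> real" and Ys :: "nat \<Rightarrow> 'a \<Rightarrow> real"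
    and r n :: nat and x y :: real
  assumes "prob_space M"
    and "Y \<in> borel_measurable M"
    and "\<exists>r0>0. \<forall>t. \<bar>t\<bar> < r0 \<longrightarrow> integrable M (\<lambda>\<omega>. exp (t * Y \<omega>))"
    and "\<And>j. j \<ge> 1 \<Longrightarrow> Ys j \<in> borel_measurable M"
    and "\<And>j. j \<ge> 1 \<Longrightarrow> distr M borel (Ys j) = distr M borel Y"
    and "prob_space.indep_vars M (\<lambda>_. borel) Ys {1..}"
    and "r \<ge> 1"
  shows "prob_r_bell M Y r n x y =
    (\<Sum>k\<le>n. prob_r_stirling2 M Ys r n k * falling_fact x k * y ^ k)"
proof -
  interpret prob_space M by (rule assms(1))
  have mY: "integrable M (\<lambda>\<omega>. Y \<omega> ^ k)" for k by (rule moments_exist[OF assms(2,3)])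
  have ps: "(\<forall>k. integrable M (\<lambda>\<omega>. partial_sum Ys j \<omega> ^ k)) \<and> mgf_fps M (partial_sum Ys j) = mgf_fps M Y ^ j" for j
    by (rule psum_mgf[OF assms(2) mY assms(4,5,6)])
  have key: "(\<integral>\<omega>. (partial_sum Ys j \<omega> + real r) ^ n \<partial>M) = fact n * fps_nth ((mgf_fps M Y ^ j * fps_exp (real r))) n" for j
  proof -
    let ?S = "partial_sum Ys j"
    have iS: "integrable M (\<lambda>\<omega>. ?S \<omega> ^ k)" for k using ps by blast
    have indp: "integrable M (\<lambda>\<omega>. ?S \<omega> ^ a * real r ^ b) \<and>
       (\<integral>\<omega>. ?S \<omega> ^ a * real r ^ b \<partial>M) = (\<integral>\<omega>. ?S \<omega> ^ a \<partial>M) * (\<integral>\<omega>. real r ^ b \<partial>M)" for a b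
      using iS[of a] by (simp add: prob_space)
    have "mgf_fps M (\<lambda>\<omega>. ?S \<omega> + real r) = mgf_fps M ?S * mgf_fps M (\<lambda>_. real r)"
      by (rule mgf_add(1)[OF iS _ indp]) simp
    then have "mgf_fps M (\<lambda>\<omega>. ?S \<omega> + real r) = mgf_fps M Y ^ j * fps_exp (real r)"
      using ps by (simp add: mgf_const)
    then have "fps_nth (mgf_fps M (\<lambda>\<omega>. ?S \<omega> + real r)) n = fps_nth (mgf_fps M Y ^ j * fps_exp (real r)) n" by simp
    then show ?thesis by (simp add: mgf_nth field_simps)
  qed
  have G0: "fps_nth (mgf_fps M Y) 0 = 1" by (simp add: mgf_nth prob_space)
  have "prob_r_bell M Y r n x y = (\<Sum>i\<le>n. (x gchoose i) * y ^ i * (\<Sum>j\<le>i. real (i choose j) * (-1) ^ (i - j) * (fact n * fps_nth ((mgf_fps M Y ^ j * fps_exp (real r))) n)))"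
    unfolding prob_r_bell_def by (rule fps_part[OF G0])
  also have "\<dots> = (\<Sum>k\<le>n. prob_r_stirling2 M Ys r n k * falling_fact x k * y ^ k)"
    unfolding prob_r_stirling2_def falling_gchoose key
    by (intro sum.cong refl, rule aux_cancel) simp
  finally show ?thesis .
qed

end
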